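(* For polarization $a$, intensity $\mu>0$ and flag $z$, let $\sigma_{(a,\mu,z)}=\sum_{N=0}^\infty e^{-\mu}\frac{\mu^N}{N!}|N\rangle\langle N|_a$ and $$\xi_{(a,\mu,z)}=\sum_{N=0}^{N_{\mathrm{decoy}}}e^{-\mu}\frac{\mu^N}{N!}|N\rangle\langle N|_a+\Big(1-\sum_{N=0}^{N_{\mathrm{decoy}}}e^{-\mu}\frac{\mu^N}{N!}\Big)|a,\mu\rangle\langle a,\mu|,$$ where $\{|a,\mu\rangle\}_{a,\mu}$ is an orthonormal set orthogonal to the span of all $|N\rangle_a$ with $N\le N_{\mathrm{decoy}}$. Then there is a channel $\Psi_{\mathrm{tag}}$ with $\Psi_{\mathrm{tag}}[\xi_{(a,\mu,z)}]=\sigma_{(a,\mu,z)}$ for all setting choices $(a,\mu,z)$.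
   Context: $|N\rangle_a$ denotes the Fock state of $N$ photons all with polarization $a$ (from a finite set of polarizations); the set of intensities is finite; $N_{\mathrm{decoy}}\in\mathbb N$. *)

theory Defs
  imports "HOL-Analysis.Analysis" "HOL-Library.Countable"
begin

text \<open>Density operators are represented by their matrix elements
  <e_i| rho |e_j> with respect to the standard orthonormal basis.\<close>

definition l2 :: "('i \<Rightarrow> complex) \<Rightarrow> bool" where
  "l2 x \<longleftrightarrow> (\<lambda>i. (cmod (x i))^2) summable_on UNIV"

definition l2norm :: "('i \<Rightarrow> complex) \<Rightarrow> real" where
  "l2norm x = sqrt (\<Sum>\<^sub>\<infinity>i. (cmod (x i))^2)"

definition cinner :: "('i \<Rightarrow> complex) \<Rightarrow> ('i \<Rightarrow> complex) \<Rightarrow> complex" where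
  "cinner x y = (\<Sum>\<^sub>\<infinity>i. cnj (x i) * y i)"

text \<open>Quantum channel on l2(I), given in Kraus form: a countable family of linear maps
  K_k on l2(I) with sum_k K_k^* K_k = 1, i.e. sum_k ||K_k x||^2 = ||x||^2.\<close>

definition kraus_family :: "(nat \<Rightarrow> ('i \<Rightarrow> complex) \<Rightarrow> ('i \<Rightarrow> complex)) \<Rightarrow> bool" where
  "kraus_family K \<longleftrightarrow>
     (\<forall>k x. l2 x \<longrightarrow> l2 (K k x)) \<and>
     (\<forall>k c x y. l2 x \<longrightarrow> l2 y \<longrightarrow> K k (\<lambda>i. c * x i + y i) = (\<lambda>i. c * K k x i + K k y i)) \<and>
     (\<forall>x. l2 x \<longrightarrow> ((\<lambda>k. (l2norm (K k x))^2) has_sum (l2norm x)^2) UNIV)"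

definition dens :: "('n \<Rightarrow> real) \<Rightarrow> ('n \<Rightarrow> 'i \<Rightarrow> complex) \<Rightarrow> 'i \<Rightarrow> 'i \<Rightarrow> complex" where
  "dens p \<psi> i j = (\<Sum>\<^sub>\<infinity>n. complex_of_real (p n) * \<psi> n i * cnj (\<psi> n j))"

text \<open>Matrix elements of Psi[rho] = sum_k K_k rho K_k^*, with rho = sum_n p n |psi n><psi n|.\<close>

definition apply_kraus ::
  "(nat \<Rightarrow> ('i \<Rightarrow> complex) \<Rightarrow> ('i \<Rightarrow> complex)) \<Rightarrow> ('n \<Rightarrow> real) \<Rightarrow> ('n \<Rightarrow> 'i \<Rightarrow> complex)
     \<Rightarrow> 'i \<Rightarrow> 'i \<Rightarrow> complex" where
  "apply_kraus K p \<psi> i j = (\<Sum>\<^sub>\<infinity>k. dens p (\<lambda>n. K k (\<psi> n)) i j)"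

text \<open>Ambient Hilbert space: two-mode (H/V) bosonic Fock space, basis |m,n> indexed by
  Inl (m,n), direct sum with an auxiliary space l2('e) (basis Inr e).
  A polarization is given by its Jones vector (alpha, beta), and
  |N>_a = (alpha h^+ + beta v^+)^N / sqrt(N!) |0,0>
        = sum_k sqrt(N choose k) alpha^k beta^(N-k) |k, N-k>.\<close>

definition fock_state :: "complex \<times> complex \<Rightarrow> nat \<Rightarrow> (nat \<times> nat) + 'e \<Rightarrow> complex" where
  "fock_state pol N = (\<lambda>idx. case idx of
      Inl (k, m) \<Rightarrow> (if k + m = N
                     then complex_of_real (sqrt (real (N choose k))) * fst pol ^ k * snd pol ^ m
                     else 0)
    | Inr _ \<Rightarrow> 0)"

definition poisson :: "real \<Rightarrow> nat \<Rightarrow> real" where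
  "poisson \<mu> N = exp (- \<mu>) * \<mu> ^ N / fact N"

text \<open>Ensemble for xi: index None = tag state |a,mu>, index Some N = Fock state |N>_a.\<close>

definition xi_weight :: "nat \<Rightarrow> real \<Rightarrow> nat option \<Rightarrow> real" where
  "xi_weight Ndecoy \<mu> o' = (case o' of
      None \<Rightarrow> 1 - (\<Sum>N\<le>Ndecoy. poisson \<mu> N)
    | Some N \<Rightarrow> (if N \<le> Ndecoy then poisson \<mu> N else 0))"

definition xi_states ::
  "('p \<Rightarrow> complex \<times> complex) \<Rightarrow> ('p \<Rightarrow> real \<Rightarrow> (nat \<times> nat) + 'e \<Rightarrow> complex) \<Rightarrow> 'p \<Rightarrow> real
     \<Rightarrow> nat option \<Rightarrow> (nat \<times> nat) + 'e \<Rightarrow> complex" where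
  "xi_states jones tag a \<mu> o' = (case o' of
      None \<Rightarrow> tag a \<mu>
    | Some N \<Rightarrow> fock_state (jones a) N)"

end

theory Submission
  imports Defs "HOL-Library.Nat_Bijection"
begin

lemma sq_sum_le: "((a::real) + b)^2 \<le> 2 * a^2 + 2 * b^2"
proof -
  have "0 \<le> (a - b)^2" by simp
  then show ?thesis by (simp add: power2_sum power2_diff)
qed

lemma norm_mult_le_sq: "cmod a * cmod b \<le> (cmod a)^2 + (cmod b)^2"
proof -
  have "0 \<le> (cmod a - cmod b)^2" by simp
  then have "2 * (cmod a * cmod b) \<le> (cmod a)^2 + (cmod b)^2" by (simp add: power2_diff)
  moreover have "0 \<le> cmod a * cmod b" by simp
  ultimately show ?thesis by linarith
qed

lemma l2_inner_summable:
  assumes "l2 x" "l2 y"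
  shows "(\<lambda>i. cnj (x i) * y i) summable_on UNIV"
proof (rule abs_summable_summable)
  have s: "(\<lambda>i. (cmod (x i))^2 + (cmod (y i))^2) summable_on UNIV"
    using assms unfolding l2_def by (rule summable_on_add)
  show "(\<lambda>i. norm (cnj (x i) * y i)) summable_on UNIV"
    by (rule summable_on_comparison_test[OF s]) (auto simp: norm_mult norm_mult_le_sq)
qed

lemma l2_lin:
  assumes "l2 x" "l2 y"
  shows "l2 (\<lambda>i. c * x i + y i)"
proof -
  have s: "(\<lambda>i. 2 * (cmod c)^2 * (cmod (x i))^2 + 2 * (cmod (y i))^2) summable_on UNIV"
    using assms unfolding l2_def
    by (intro summable_on_add summable_on_cmult_right)
  have le: "(cmod (c * x i + y i))^2 \<le> 2 * (cmod c)^2 * (cmod (x i))^2 + 2 * (cmod (y i))^2" for i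
  proof -
    have "cmod (c * x i + y i) \<le> cmod c * cmod (x i) + cmod (y i)"
      by (metis norm_mult norm_triangle_ineq)
    then have "(cmod (c * x i + y i))^2 \<le> (cmod c * cmod (x i) + cmod (y i))^2"
      by (simp add: power_mono)
    also have "\<dots> \<le> 2 * (cmod c)^2 * (cmod (x i))^2 + 2 * (cmod (y i))^2"
      using sq_sum_le[of "cmod c * cmod (x i)" "cmod (y i)"] by (simp add: power_mult_distrib)
    finally show ?thesis .
  qed
  show ?thesis unfolding l2_def
    by (rule summable_on_comparison_test[OF s]) (use le in auto)
qed

lemma l2_zero: "l2 (\<lambda>i. 0)" by (simp add: l2_def)

lemma l2_scale: "l2 x \<Longrightarrow> l2 (\<lambda>i. c * x i)"
  using l2_lin[of x "\<lambda>i. 0" c] l2_zero by simp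

lemma l2_add: "l2 x \<Longrightarrow> l2 y \<Longrightarrow> l2 (\<lambda>i. x i + y i)"
  using l2_lin[of x y 1] by simp

lemma l2_diff: "l2 x \<Longrightarrow> l2 y \<Longrightarrow> l2 (\<lambda>i. x i - y i)"
  using l2_lin[of y x "-1"] by simp

lemma l2_sum: "finite F \<Longrightarrow> (\<And>t. t \<in> F \<Longrightarrow> l2 (f t)) \<Longrightarrow> l2 (\<lambda>i. \<Sum>t\<in>F. f t i)"
  by (induction F rule: finite_induct) (auto simp: l2_zero intro!: l2_add)

lemma cinner_lin2:
  assumes "l2 x" "l2 y" "l2 z"
  shows "cinner x (\<lambda>i. c * y i + z i) = c * cinner x y + cinner x z"
proof -
  have "cinner x (\<lambda>i. c * y i + z i) = (\<Sum>\<^sub>\<infinity>i. c * (cnj (x i) * y i) + cnj (x i) * z i)"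
    unfolding cinner_def by (simp add: algebra_simps)
  also have "\<dots> = (\<Sum>\<^sub>\<infinity>i. c * (cnj (x i) * y i)) + (\<Sum>\<^sub>\<infinity>i. cnj (x i) * z i)"
    by (intro infsum_add summable_on_cmult_right l2_inner_summable assms)
  also have "\<dots> = c * cinner x y + cinner x z"
    unfolding cinner_def by (subst infsum_cmult_right) (auto intro: l2_inner_summable assms)
  finally show ?thesis .
qed

lemma cinner_cnj: "cinner y x = cnj (cinner x y)"
  unfolding cinner_def by (simp flip: infsum_cnj add: mult.commute)

lemma cinner_lin1:
  assumes "l2 x" "l2 y" "l2 z"
  shows "cinner (\<lambda>i. c * y i + z i) x = cnj c * cinner y x + cinner z x"
  by (subst (1 2 3) cinner_cnj) (simp add: cinner_lin2 assms)

lemma cinner_sum2: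
  assumes "finite F" "l2 x" "\<And>t. t \<in> F \<Longrightarrow> l2 (f t)"
  shows "cinner x (\<lambda>i. \<Sum>t\<in>F. c t * f t i) = (\<Sum>t\<in>F. c t * cinner x (f t))"
  using assms
proof (induction F rule: finite_induct)
  case empty then show ?case by (simp add: cinner_def)
next
  case (insert a F)
  have "cinner x (\<lambda>i. \<Sum>t\<in>insert a F. c t * f t i) = cinner x (\<lambda>i. c a * f a i + (\<Sum>t\<in>F. c t * f t i))"
    using insert by simp
  also have "\<dots> = c a * cinner x (f a) + cinner x (\<lambda>i. (\<Sum>t\<in>F. c t * f t i))"
    using insert by (intro cinner_lin2 l2_sum l2_scale) auto
  finally show ?case using insert by simp
qed

lemma cinner_sum1:
  assumes "finite F" "l2 x" "\<And>t. t \<in> F \<Longrightarrow> l2 (f t)"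
  shows "cinner (\<lambda>i. \<Sum>t\<in>F. c t * f t i) x = (\<Sum>t\<in>F. cnj (c t) * cinner (f t) x)"
proof -
  have "cinner (\<lambda>i. \<Sum>t\<in>F. c t * f t i) x = cnj (cinner x (\<lambda>i. \<Sum>t\<in>F. c t * f t i))"
    by (rule cinner_cnj)
  also have "\<dots> = cnj (\<Sum>t\<in>F. c t * cinner x (f t))" by (simp add: cinner_sum2 assms)
  also have "\<dots> = (\<Sum>t\<in>F. cnj (c t) * cinner (f t) x)"
    by (simp add: cinner_cnj[of x])
  finally show ?thesis .
qed

lemma cinner_self: "l2 x \<Longrightarrow> cinner x x = complex_of_real ((l2norm x)^2)"
proof -
  assume "l2 x"
  have "cinner x x = (\<Sum>\<^sub>\<infinity>i. complex_of_real ((cmod (x i))^2))"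
    unfolding cinner_def by (intro infsum_cong) (metis complex_norm_square mult.commute)
  also have "\<dots> = complex_of_real (\<Sum>\<^sub>\<infinity>i. (cmod (x i))^2)"
    using has_sum_of_real[of "\<lambda>i. (cmod (x i))^2"] \<open>l2 x\<close> unfolding l2_def
    by (metis has_sum_infsum infsumI)
  also have "(\<Sum>\<^sub>\<infinity>i. (cmod (x i))^2) = (l2norm x)^2"
    unfolding l2norm_def by (simp add: infsum_nonneg)
  finally show ?thesis .
qed


lemma cnj_mult_self: "cnj c * c = complex_of_real ((cmod c)^2)"
  by (metis complex_norm_square mult.commute)

lemma proj_norm:
  assumes F: "finite F" and x: "l2 x" and e: "\<And>t. t \<in> F \<Longrightarrow> l2 (e t)"
    and on: "\<And>s t. s \<in> F \<Longrightarrow> t \<in> F \<Longrightarrow> cinner (e s) (e t) = (if s = t then 1 else 0)"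
  shows "(l2norm (\<lambda>i. x i - (\<Sum>t\<in>F. cinner (e t) x * e t i)))^2
           = (l2norm x)^2 - (\<Sum>t\<in>F. (cmod (cinner (e t) x))^2)"
proof -
  define c where "c t = cinner (e t) x" for t
  define y where "y = (\<lambda>i. \<Sum>t\<in>F. c t * e t i)"
  define S where "S = (\<Sum>t\<in>F. (cmod (c t))^2)"
  have y: "l2 y" unfolding y_def by (intro l2_sum l2_scale e F)
  have ey: "cinner (e s) y = c s" if "s \<in> F" for s
  proof -
    have "cinner (e s) y = (\<Sum>t\<in>F. c t * cinner (e s) (e t))"
      unfolding y_def using that by (intro cinner_sum2 F e) auto
    also have "\<dots> = (\<Sum>t\<in>F. if t = s then c t else 0)"
      by (intro sum.cong) (auto simp: on that)
    also have "\<dots> = c s" using F that by simp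
    finally show ?thesis .
  qed
  have yy: "cinner y y = complex_of_real S"
  proof -
    have "cinner y y = (\<Sum>t\<in>F. cnj (c t) * cinner (e t) y)"
      using cinner_sum1[OF F y e, where c=c] unfolding y_def by simp
    also have "\<dots> = (\<Sum>t\<in>F. complex_of_real ((cmod (c t))^2))"
      by (intro sum.cong) (auto simp: ey cnj_mult_self)
    finally show ?thesis unfolding S_def by simp
  qed
  have yx: "cinner y x = complex_of_real S"
  proof -
    have "cinner y x = (\<Sum>t\<in>F. cnj (c t) * cinner (e t) x)"
      unfolding y_def by (intro cinner_sum1 F x e)
    also have "\<dots> = (\<Sum>t\<in>F. complex_of_real ((cmod (c t))^2))"
      by (intro sum.cong) (auto simp: c_def cnj_mult_self)
    finally show ?thesis unfolding S_def by simp
  qed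
  have xy: "cinner x y = complex_of_real S"
    using yx cinner_cnj[of x y] by simp
  have xmy: "(\<lambda>i. x i - (\<Sum>t\<in>F. cinner (e t) x * e t i)) = (\<lambda>i. (-1) * y i + x i)"
    unfolding y_def c_def by auto
  define z where "z = (\<lambda>i. (-1) * y i + x i)"
  have mx: "l2 z" unfolding z_def by (intro l2_lin x y)
  have h: "cinner w z = (-1) * cinner w y + cinner w x" if "l2 w" for w
    unfolding z_def by (rule cinner_lin2) (use that x y in auto)
  have "cinner z z = - cinner y z + cinner x z"
    by (subst (1) z_def, subst cinner_lin1) (use x y mx in auto)
  also have "\<dots> = - ((-1) * cinner y y + cinner y x) + ((-1) * cinner x y + cinner x x)"
    by (simp only: h[OF y] h[OF x])
  also have "\<dots> = cinner y y - cinner y x - cinner x y + cinner x x" by simp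
  finally have "cinner z z = cinner x x - complex_of_real S"
    using yy yx xy by simp
  then have "complex_of_real ((l2norm z)^2) = complex_of_real ((l2norm x)^2 - S)"
    using cinner_self[OF mx] cinner_self[OF x] by simp
  then have "(l2norm z)^2 = (l2norm x)^2 - S"
    using of_real_eq_iff by blast
  then show ?thesis using xmy unfolding S_def c_def z_def by simp
qed


lemma has_sum_support:
  assumes "finite A" "\<And>i. i \<notin> A \<Longrightarrow> f i = 0"
  shows "(f has_sum (sum f A)) UNIV"
proof -
  have "(f has_sum (sum f A)) A" using assms(1) by simp
  then show ?thesis by (subst has_sum_cong_neutral[where T=A and g=f]) (use assms in auto)
qed

lemma fock_support: "fock_state pol N i \<noteq> 0 \<Longrightarrow> i \<in> (\<lambda>k. Inl (k, N - k)) ` {..N}"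
  unfolding fock_state_def by (auto split: sum.splits if_splits)

lemma fock_l2: "l2 (fock_state pol N)"
  unfolding l2_def using has_sum_support[of "(\<lambda>k. Inl (k, N - k)) ` {..N}" "\<lambda>i. (cmod (fock_state pol N i))^2"]
    fock_support[of pol N] by (force simp: summable_on_def)

lemma fock_norm:
  assumes "(cmod (fst pol))^2 + (cmod (snd pol))^2 = 1"
  shows "(l2norm (fock_state pol N :: (nat \<times> nat) + 'e \<Rightarrow> complex))^2 = 1"
proof -
  let ?A = "(\<lambda>k. Inl (k, N - k)) ` {..N} :: ((nat \<times> nat) + 'e) set"
  let ?f = "\<lambda>i::(nat \<times> nat) + 'e. (cmod (fock_state pol N i :: complex))^2"
  have "(?f has_sum (sum ?f ?A)) UNIV"
    by (rule has_sum_support) (use fock_support[of pol N] in auto)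
  then have "(\<Sum>\<^sub>\<infinity>i. ?f i) = sum ?f ?A" by (simp add: infsumI)
  also have "\<dots> = (\<Sum>k\<le>N. ?f (Inl (k, N - k)))"
    by (subst sum.reindex) (auto simp: inj_on_def)
  also have "\<dots> = (\<Sum>k\<le>N. real (N choose k) * ((cmod (fst pol))^2)^k * ((cmod (snd pol))^2)^(N-k))"
    by (intro sum.cong) (auto simp: fock_state_def norm_mult norm_power power_mult_distrib
        power_mult[symmetric] mult.commute[of 2])
  also have "\<dots> = ((cmod (fst pol))^2 + (cmod (snd pol))^2)^N"
    by (simp add: binomial_ring)
  also have "\<dots> = 1" using assms by simp
  finally show ?thesis unfolding l2norm_def by (simp add: infsum_nonneg)
qed

lemma poisson_nonneg: "\<mu> \<ge> 0 \<Longrightarrow> poisson \<mu> N \<ge> 0"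
  unfolding poisson_def by simp

lemma poisson_pos: "\<mu> > 0 \<Longrightarrow> poisson \<mu> N > 0"
  unfolding poisson_def by simp

lemma poisson_has_sum:
  assumes "\<mu> \<ge> 0" shows "(poisson \<mu> has_sum 1) UNIV"
proof -
  have "(\<lambda>N. \<mu>^N /\<^sub>R fact N) sums exp \<mu>" by (rule exp_converges)
  then have "(\<lambda>N. exp (-\<mu>) * (\<mu>^N /\<^sub>R fact N)) sums (exp (-\<mu>) * exp \<mu>)"
    by (rule sums_mult)
  moreover have "poisson \<mu> = (\<lambda>N. exp (-\<mu>) * (\<mu>^N /\<^sub>R fact N))"
    by (rule ext) (simp add: poisson_def field_simps)
  moreover have "exp (-\<mu>) * exp \<mu> = 1" by (simp add: exp_minus_inverse mult.commute)
  ultimately have "poisson \<mu> sums 1" by simp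
  then show ?thesis by (rule sums_nonneg_imp_has_sum) (use poisson_nonneg assms in auto)
qed

lemma has_sum_tail:
  fixes f :: "nat \<Rightarrow> 'b::{topological_ab_group_add}"
  assumes "(f has_sum s) UNIV"
  shows "((\<lambda>N. if Nd < N then f N else 0) has_sum (s - (\<Sum>N\<le>Nd. f N))) UNIV"
proof -
  have "(f has_sum (s - (\<Sum>N\<le>Nd. f N))) (UNIV - {..Nd})"
    by (rule has_sum_Diff[OF assms]) auto
  then show ?thesis
    by (subst (asm) has_sum_cong_neutral[where T=UNIV and g="\<lambda>N. if Nd < N then f N else 0"]) auto
qed

lemma has_sum_point:
  "((\<lambda>p. if p = p0 then v else 0) has_sum v) UNIV"
proof -
  have "((\<lambda>p. if p = p0 then v else 0) has_sum (sum (\<lambda>p. if p = p0 then v else 0) {p0})) UNIV"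
    by (rule has_sum_support) auto
  then show ?thesis by simp
qed

lemma has_sum_row:
  assumes "(h has_sum s) UNIV"
  shows "((\<lambda>p. if fst p = j then h (snd p) else 0) has_sum s) UNIV"
proof -
  have "((\<lambda>p. if fst p = j then h (snd p) else 0) has_sum s) (Pair j ` UNIV)"
    by (subst has_sum_reindex) (auto simp: o_def assms inj_on_def)
  then show ?thesis
    by (subst (asm) has_sum_cong_neutral[where T=UNIV]) auto
qed

lemma has_sum_sum_fun:
  fixes f :: "'t \<Rightarrow> 'a \<Rightarrow> 'b::topological_comm_monoid_add"
  assumes "finite F" "\<And>t. t \<in> F \<Longrightarrow> (f t has_sum s t) A"
  shows "((\<lambda>x. \<Sum>t\<in>F. f t x) has_sum (\<Sum>t\<in>F. s t)) A"
  using assms by (induction F rule: finite_induct) (auto intro: has_sum_add)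

lemma l2norm_scale: "(l2norm (\<lambda>i. c * v i))^2 = (cmod c)^2 * (l2norm v)^2"
proof -
  have "(\<Sum>\<^sub>\<infinity>i. (cmod (c * v i))^2) = (\<Sum>\<^sub>\<infinity>i. (cmod c)^2 * (cmod (v i))^2)"
    by (simp add: norm_mult power_mult_distrib)
  also have "\<dots> = (cmod c)^2 * (\<Sum>\<^sub>\<infinity>i. (cmod (v i))^2)"
    by (rule infsum_cmult_right') 
  finally show ?thesis unfolding l2norm_def by (simp add: infsum_nonneg)
qed

lemma l2norm_zero: "l2norm (\<lambda>i. 0) = 0" by (simp add: l2norm_def)


definition tagv :: "('p \<Rightarrow> real \<Rightarrow> 'i \<Rightarrow> complex) \<Rightarrow> 'p \<times> real \<Rightarrow> 'i \<Rightarrow> complex" where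
  "tagv tag t = tag (fst t) (snd t)"

definition Sd :: "nat \<Rightarrow> real \<Rightarrow> real" where
  "Sd Nd \<mu> = (\<Sum>N\<le>Nd. poisson \<mu> N)"

definition wt :: "nat \<Rightarrow> real \<Rightarrow> nat \<Rightarrow> real" where
  "wt Nd \<mu> N = poisson \<mu> N / (1 - Sd Nd \<mu>)"

definition K0 :: "'t set \<Rightarrow> ('t \<Rightarrow> 'i \<Rightarrow> complex) \<Rightarrow> ('i \<Rightarrow> complex) \<Rightarrow> 'i \<Rightarrow> complex" where
  "K0 F e x = (\<lambda>i. x i - (\<Sum>t\<in>F. cinner (e t) x * e t i))"

definition R1 :: "complex \<Rightarrow> ('i \<Rightarrow> complex) \<Rightarrow> ('i \<Rightarrow> complex) \<Rightarrow> ('i \<Rightarrow> complex) \<Rightarrow> 'i \<Rightarrow> complex" where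
  "R1 c e v x = (\<lambda>i. c * cinner e x * v i)"

definition Kf where
  "Kf jones tag Mu Nd g n k = (case prod_decode k of (j, N) \<Rightarrow>
     if j = 0 then (if N = 0 then K0 (UNIV \<times> Mu) (tagv tag) else (\<lambda>x i. 0))
     else if j - 1 < n \<and> Nd < N then
       R1 (complex_of_real (sqrt (wt Nd (snd (g (j - 1))) N))) (tagv tag (g (j - 1)))
          (fock_state (jones (fst (g (j - 1)))) N)
     else (\<lambda>x i. 0))"

lemma Sd_less: "\<mu> > 0 \<Longrightarrow> Sd Nd \<mu> < 1"
proof -
  assume mu: "\<mu> > 0"
  have "(\<Sum>N\<le>Suc Nd. poisson \<mu> N) \<le> 1"
    by (rule finite_sum_le_has_sum[OF poisson_has_sum]) (use mu poisson_nonneg in auto)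
  moreover have "poisson \<mu> (Suc Nd) > 0" using mu by (rule poisson_pos)
  ultimately show ?thesis unfolding Sd_def by simp
qed

lemma wt_tail:
  assumes mu: "\<mu> > 0"
  shows "((\<lambda>N. if Nd < N then wt Nd \<mu> N * C else 0) has_sum C) UNIV"
proof -
  define d where "d = 1 - Sd Nd \<mu>"
  have d: "d > 0" using Sd_less[OF mu] unfolding d_def by simp
  have "((\<lambda>N. poisson \<mu> N * (C / d)) has_sum (1 * (C / d))) UNIV"
    by (rule has_sum_cmult_left[OF poisson_has_sum]) (use mu in simp)
  from has_sum_tail[OF this, of Nd]
  have "((\<lambda>N. if Nd < N then poisson \<mu> N * (C / d) else 0) has_sum (C / d - (\<Sum>N\<le>Nd. poisson \<mu> N * (C / d)))) UNIV"
    by simp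
  moreover have "C / d - (\<Sum>N\<le>Nd. poisson \<mu> N * (C / d)) = C"
  proof -
    have "(\<Sum>N\<le>Nd. poisson \<mu> N * (C / d)) = Sd Nd \<mu> * (C / d)"
      unfolding Sd_def by (simp only: sum_distrib_right)
    also have "Sd Nd \<mu> = 1 - d" unfolding d_def by simp
    finally show ?thesis using d by (simp add: field_simps)
  qed
  moreover have "(\<lambda>N. if Nd < N then poisson \<mu> N * (C / d) else 0) = (\<lambda>N. if Nd < N then wt Nd \<mu> N * C else 0)"
    unfolding wt_def d_def by (auto simp: field_simps)
  ultimately show ?thesis by simp
qed

lemma K0_lin:
  assumes F: "finite F" and e: "\<And>t. t \<in> F \<Longrightarrow> l2 (e t)" and x: "l2 x" and y: "l2 y"
  shows "K0 F e (\<lambda>i. c * x i + y i) = (\<lambda>i. c * K0 F e x i + K0 F e y i)"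
proof -
  have "cinner (e t) (\<lambda>i. c * x i + y i) = c * cinner (e t) x + cinner (e t) y" if "t \<in> F" for t
    by (rule cinner_lin2) (use that e x y in auto)
  then show ?thesis unfolding K0_def
    by (auto simp: algebra_simps sum.distrib sum_distrib_left sum_subtractf intro!: ext sum.cong)
qed

lemma R1_lin:
  assumes e: "l2 e" and x: "l2 x" and y: "l2 y"
  shows "R1 a e v (\<lambda>i. c * x i + y i) = (\<lambda>i. c * R1 a e v x i + R1 a e v y i)"
  unfolding R1_def by (subst cinner_lin2[OF e x y]) (auto simp: algebra_simps)


lemma Kf_kraus:
  fixes jones :: "'p \<Rightarrow> complex \<times> complex"
    and tag :: "'p \<Rightarrow> real \<Rightarrow> (nat \<times> nat) + 'e \<Rightarrow> complex"
  assumes jones_unit: "\<forall>a. (cmod (fst (jones a)))^2 + (cmod (snd (jones a)))^2 = 1"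
    and Mu_fin: "finite Mu" and P_fin: "finite (UNIV :: 'p set)"
    and Mu_pos: "\<forall>\<mu>\<in>Mu. \<mu> > 0"
    and tag_l2: "\<forall>a \<mu>. \<mu> \<in> Mu \<longrightarrow> l2 (tag a \<mu>)"
    and tag_on: "\<forall>a b \<mu> \<nu>. \<mu> \<in> Mu \<longrightarrow> \<nu> \<in> Mu \<longrightarrow>
                   cinner (tag a \<mu>) (tag b \<nu>) = (if a = b \<and> \<mu> = \<nu> then 1 else 0)"
    and bij: "bij_betw g {..<n} (UNIV \<times> Mu)"
  shows "kraus_family (Kf jones tag Mu Nd g n)"
proof -
  define T where "T = (UNIV :: 'p set) \<times> Mu"
  define K where "K = Kf jones tag Mu Nd g n"
  have Tfin: "finite T" unfolding T_def using Mu_fin P_fin by simp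
  have te: "l2 (tagv tag t)" if "t \<in> T" for t
    using that tag_l2 unfolding T_def tagv_def by auto
  have ton: "cinner (tagv tag s) (tagv tag t) = (if s = t then 1 else 0)" if "s \<in> T" "t \<in> T" for s t
    using that tag_on unfolding T_def tagv_def by (auto simp: prod_eq_iff)
  have gT: "g j \<in> T" if "j < n" for j
    using bij that unfolding T_def by (auto dest: bij_betw_apply)
  have Kdef: "K k = (if fst (prod_decode k) = 0 then (if snd (prod_decode k) = 0 then K0 T (tagv tag) else (\<lambda>x i. 0))
     else if fst (prod_decode k) - 1 < n \<and> Nd < snd (prod_decode k) then
       R1 (complex_of_real (sqrt (wt Nd (snd (g (fst (prod_decode k) - 1))) (snd (prod_decode k)))))
          (tagv tag (g (fst (prod_decode k) - 1)))
          (fock_state (jones (fst (g (fst (prod_decode k) - 1)))) (snd (prod_decode k)))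
     else (\<lambda>x i. 0))" for k
    unfolding K_def Kf_def T_def by (simp split: prod.splits)
  have l2K: "l2 (K k x)" if x: "l2 x" for k x
  proof -
    have "l2 (K0 T (tagv tag) x)" unfolding K0_def
      by (intro l2_diff x l2_sum Tfin l2_scale te)
    moreover have "l2 (R1 a e (fock_state pol N) x)" for a e pol N
      unfolding R1_def by (intro l2_scale fock_l2)
    ultimately show ?thesis unfolding Kdef by (auto simp: l2_zero)
  qed
  have linK: "K k (\<lambda>i. c * x i + y i) = (\<lambda>i. c * K k x i + K k y i)" if x: "l2 x" and y: "l2 y" for k c x y
  proof -
    have "K0 T (tagv tag) (\<lambda>i. c * x i + y i) = (\<lambda>i. c * K0 T (tagv tag) x i + K0 T (tagv tag) y i)"
      by (rule K0_lin[OF Tfin te x y])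
    moreover have "R1 a (tagv tag (g j)) v (\<lambda>i. c * x i + y i)
        = (\<lambda>i. c * R1 a (tagv tag (g j)) v x i + R1 a (tagv tag (g j)) v y i)" if "j < n" for a j v
      by (rule R1_lin[OF te[OF gT[OF that]] x y])
    ultimately show ?thesis unfolding Kdef by auto
  qed
  have normK: "((\<lambda>k. (l2norm (K k x))^2) has_sum (l2norm x)^2) UNIV" if x: "l2 x" for x
  proof -
    define c where "c t = cinner (tagv tag t) x" for t
    define A where "A = (l2norm x)^2 - (\<Sum>t\<in>T. (cmod (c t))^2)"
    define h where "h j' = (\<lambda>N. if Nd < N then wt Nd (snd (g j')) N * (cmod (c (g j')))^2 else 0)" for j'
    define E where "E p = (if p = (0, 0) then A else 0)
        + (\<Sum>j'\<in>{..<n}. if fst p = Suc j' then h j' (snd p) else 0)" for p :: "nat \<times> nat"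
    have hs: "(h j' has_sum (cmod (c (g j')))^2) UNIV" if "j' < n" for j'
      unfolding h_def
    proof (rule wt_tail)
      show "snd (g j') > 0" using gT[OF that] Mu_pos unfolding T_def by auto
    qed
    have "(E has_sum (A + (\<Sum>j'\<in>{..<n}. (cmod (c (g j')))^2))) UNIV"
      unfolding E_def
      by (intro has_sum_add has_sum_point has_sum_sum_fun has_sum_row hs) auto
    moreover have "(\<Sum>j'\<in>{..<n}. (cmod (c (g j')))^2) = (\<Sum>t\<in>T. (cmod (c t))^2)"
      using sum.reindex_bij_betw[OF bij[folded T_def], of "\<lambda>t. (cmod (c t))^2"] by simp
    ultimately have EH: "(E has_sum (l2norm x)^2) UNIV" unfolding A_def by simp
    have eq: "(l2norm (K k x))^2 = E (prod_decode k)" for k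
    proof -
      obtain j N where pd: "prod_decode k = (j, N)" by fastforce
      show ?thesis
      proof (cases j)
        case 0
        show ?thesis
        proof (cases "N = 0")
          case True
          have "(l2norm (K k x))^2 = A"
            unfolding Kdef pd using 0 True
            by (simp add: K0_def A_def c_def proj_norm[OF Tfin x te ton])
          then show ?thesis using 0 True pd by (simp add: E_def)
        next
          case False
          then show ?thesis using 0 pd by (simp add: E_def Kdef l2norm_zero)
        qed
      next
        case (Suc j1)
        show ?thesis
        proof (cases "j1 < n \<and> Nd < N")
          case True
          have mu: "snd (g j1) > 0" using gT[of j1] True Mu_pos unfolding T_def by auto
          have w0: "wt Nd (snd (g j1)) N \<ge> 0"
            unfolding wt_def using Sd_less[OF mu, of Nd] poisson_nonneg[of "snd (g j1)" N] mu by simp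
          have "(l2norm (K k x))^2 = wt Nd (snd (g j1)) N * (cmod (c (g j1)))^2"
            unfolding Kdef pd using Suc True
            by (simp add: R1_def l2norm_scale fock_norm jones_unit c_def norm_mult power_mult_distrib w0)
          then show ?thesis using Suc True pd by (simp add: E_def h_def)
        next
          case False
          then show ?thesis using Suc pd by (auto simp: E_def Kdef l2norm_zero h_def)
        qed
      qed
    qed
    have "((\<lambda>k. E (prod_decode k)) has_sum (l2norm x)^2) UNIV"
      using has_sum_reindex_bij_betw[OF bij_prod_decode[unfolded bij_def[symmetric]]] EH
      by (metis bij_prod_decode has_sum_reindex_bij_betw)
    then show ?thesis using eq by simp
  qed
  show ?thesis unfolding kraus_family_def K_def[symmetric]
    using l2K linK normK by blast
qed


lemma rescale_helper:
  "complex_of_real r * (complex_of_real s * x) * cnj (complex_of_real s * y)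
     = complex_of_real (r * (s * s)) * x * cnj y"
  by (simp add: algebra_simps)

lemma Kf_output:
  fixes jones :: "'p \<Rightarrow> complex \<times> complex"
    and tag :: "'p \<Rightarrow> real \<Rightarrow> (nat \<times> nat) + 'e \<Rightarrow> complex"
  assumes Mu_fin: "finite Mu" and P_fin: "finite (UNIV :: 'p set)"
    and Mu_pos: "\<forall>\<mu>\<in>Mu. \<mu> > 0"
    and tag_l2: "\<forall>a \<mu>. \<mu> \<in> Mu \<longrightarrow> l2 (tag a \<mu>)"
    and tag_on: "\<forall>a b \<mu> \<nu>. \<mu> \<in> Mu \<longrightarrow> \<nu> \<in> Mu \<longrightarrow>
                   cinner (tag a \<mu>) (tag b \<nu>) = (if a = b \<and> \<mu> = \<nu> then 1 else 0)"
    and tag_orth: "\<forall>a b N \<nu>. N \<le> Nd \<longrightarrow> \<nu> \<in> Mu \<longrightarrow>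
                   cinner (fock_state (jones a) N) (tag b \<nu>) = 0"
    and bij: "bij_betw g {..<n} (UNIV \<times> Mu)"
    and mu: "\<mu> \<in> Mu"
  shows "apply_kraus (Kf jones tag Mu Nd g n) (xi_weight Nd \<mu>) (xi_states jones tag a \<mu>) i i'
          = dens (poisson \<mu>) (\<lambda>N. fock_state (jones a) N) i i'"
proof -
  define T where "T = (UNIV :: 'p set) \<times> Mu"
  define K where "K = Kf jones tag Mu Nd g n"
  define F where "F N = (fock_state (jones a) N :: (nat \<times> nat) + 'e \<Rightarrow> complex)" for N
  define Q where "Q N = complex_of_real (poisson \<mu> N) * F N i * cnj (F N i')" for N
  have Tfin: "finite T" unfolding T_def using Mu_fin P_fin by simp
  have mupos: "\<mu> > 0" using mu Mu_pos by auto
  have d: "1 - Sd Nd \<mu> > 0" using Sd_less[OF mupos] by simp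
  have ton: "cinner (tagv tag s) (tagv tag t) = (if s = t then 1 else 0)" if "s \<in> T" "t \<in> T" for s t
    using that tag_on unfolding T_def tagv_def by (auto simp: prod_eq_iff)
  have t0: "(a, \<mu>) \<in> T" unfolding T_def using mu by simp
  have "(a, \<mu>) \<in> g ` {..<n}" using bij t0 unfolding T_def bij_betw_def by simp
  then obtain j0 where j0: "j0 < n" "g j0 = (a, \<mu>)" by (metis imageE lessThan_iff)
  have ginj: "g j1 = g j0 \<longleftrightarrow> j1 = j0" if "j1 < n" for j1
    using bij that j0 unfolding bij_betw_def inj_on_def by auto
  have gT: "g j \<in> T" if "j < n" for j
    using bij that unfolding T_def by (auto dest: bij_betw_apply)
  have Kdef: "K k = (if fst (prod_decode k) = 0 then (if snd (prod_decode k) = 0 then K0 T (tagv tag) else (\<lambda>x i. 0))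
     else if fst (prod_decode k) - 1 < n \<and> Nd < snd (prod_decode k) then
       R1 (complex_of_real (sqrt (wt Nd (snd (g (fst (prod_decode k) - 1))) (snd (prod_decode k)))))
          (tagv tag (g (fst (prod_decode k) - 1)))
          (fock_state (jones (fst (g (fst (prod_decode k) - 1)))) (snd (prod_decode k)))
     else (\<lambda>x i. 0))" for k
    unfolding K_def Kf_def T_def by (simp split: prod.splits)
  have tF: "cinner (tagv tag t) (F N) = 0" if "t \<in> T" "N \<le> Nd" for t N
    using that tag_orth cinner_cnj[of "tagv tag t" "F N"] unfolding F_def T_def tagv_def by auto
  have KF: "K k (F N) = (if prod_decode k = (0, 0) then F N else (\<lambda>i. 0))" if "N \<le> Nd" for k N
  proof -
    have "K0 T (tagv tag) (F N) = F N"
      unfolding K0_def using tF[OF _ that] by simp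
    moreover have "R1 c (tagv tag (g j)) v (F N) = (\<lambda>i. 0)" if "j < n" for c j v
      unfolding R1_def using tF[OF gT[OF that] \<open>N \<le> Nd\<close>] by simp
    ultimately show ?thesis unfolding Kdef by (auto simp: prod_eq_iff)
  qed
  have tt: "cinner (tagv tag t) (tag a \<mu>) = (if t = (a, \<mu>) then 1 else 0)" if "t \<in> T" for t
    using ton[OF that t0] unfolding tagv_def by simp
  have Ktag: "K k (tag a \<mu>) = (if fst (prod_decode k) = Suc j0 \<and> Nd < snd (prod_decode k)
      then (\<lambda>i. complex_of_real (sqrt (wt Nd \<mu> (snd (prod_decode k)))) * F (snd (prod_decode k)) i)
      else (\<lambda>i. 0))" for k
  proof -
    have "(\<Sum>t\<in>T. cinner (tagv tag t) (tag a \<mu>) * tagv tag t i) = tag a \<mu> i" for i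
    proof -
      have "(\<Sum>t\<in>T. cinner (tagv tag t) (tag a \<mu>) * tagv tag t i)
          = (\<Sum>t\<in>T. if t = (a, \<mu>) then tagv tag t i else 0)"
        by (intro sum.cong) (auto simp: tt)
      also have "\<dots> = tag a \<mu> i"
        using t0 Tfin by (subst sum.delta) (auto simp: tagv_def)
      finally show ?thesis .
    qed
    then have "K0 T (tagv tag) (tag a \<mu>) = (\<lambda>i. 0)" unfolding K0_def by simp
    moreover have "R1 c (tagv tag (g j)) v (tag a \<mu>) = (if j = j0 then (\<lambda>i. c * v i) else (\<lambda>i. 0))"
      if "j < n" for c j v
      unfolding R1_def using tt[OF gT[OF that]] ginj[OF that] j0 by auto
    note R = this
    obtain j N where pd: "prod_decode k = (j, N)" by fastforce
    show ?thesis
    proof (cases j)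
      case 0
      then show ?thesis using pd \<open>K0 T (tagv tag) (tag a \<mu>) = (\<lambda>i. 0)\<close> by (simp add: Kdef)
    next
      case (Suc j1)
      show ?thesis
      proof (cases "j1 < n \<and> Nd < N")
        case True
        have "K k (tag a \<mu>) = R1 (complex_of_real (sqrt (wt Nd (snd (g j1)) N))) (tagv tag (g j1))
             (fock_state (jones (fst (g j1))) N) (tag a \<mu>)"
          using pd Suc True by (simp add: Kdef)
        also have "\<dots> = (if j1 = j0 then (\<lambda>i. complex_of_real (sqrt (wt Nd (snd (g j1)) N)) * fock_state (jones (fst (g j1))) N i) else (\<lambda>i. 0))"
          using R[of j1] True by simp
        finally show ?thesis using pd Suc True j0 by (auto simp: F_def)
      next
        case False
        then show ?thesis using pd Suc j0 by (auto simp: Kdef)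
      qed
    qed
  qed
  define Os where "Os = insert None (Some ` {..Nd})"
  have Ofin: "finite Os" unfolding Os_def by simp
  have D: "dens (xi_weight Nd \<mu>) (\<lambda>o'. K k (xi_states jones tag a \<mu> o')) i i'
      = complex_of_real (1 - Sd Nd \<mu>) * K k (tag a \<mu>) i * cnj (K k (tag a \<mu>) i')
        + (\<Sum>N\<le>Nd. complex_of_real (poisson \<mu> N) * K k (F N) i * cnj (K k (F N) i'))" for k
  proof -
    let ?f = "\<lambda>o'. complex_of_real (xi_weight Nd \<mu> o') * K k (xi_states jones tag a \<mu> o') i
                     * cnj (K k (xi_states jones tag a \<mu> o') i')"
    have "(?f has_sum sum ?f Os) UNIV"
      by (rule has_sum_support[OF Ofin]) (auto simp: Os_def xi_weight_def split: option.splits)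
    then have "dens (xi_weight Nd \<mu>) (\<lambda>o'. K k (xi_states jones tag a \<mu> o')) i i' = sum ?f Os"
      unfolding dens_def by (simp add: infsumI)
    also have "\<dots> = ?f None + (\<Sum>N\<le>Nd. ?f (Some N))"
      unfolding Os_def by (subst sum.insert) (auto simp: sum.reindex)
    also have "\<dots> = complex_of_real (1 - Sd Nd \<mu>) * K k (tag a \<mu>) i * cnj (K k (tag a \<mu>) i')
        + (\<Sum>N\<le>Nd. complex_of_real (poisson \<mu> N) * K k (F N) i * cnj (K k (F N) i'))"
      by (simp add: xi_weight_def xi_states_def Sd_def F_def)
    finally show ?thesis .
  qed
  define G where "G p = (if p = (0, 0) then (\<Sum>N\<le>Nd. Q N) else 0)
     + (if fst p = Suc j0 then (\<lambda>N. if Nd < N then Q N else 0) (snd p) else 0)" for p :: "nat \<times> nat"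
  have DG: "dens (xi_weight Nd \<mu>) (\<lambda>o'. K k (xi_states jones tag a \<mu> o')) i i' = G (prod_decode k)" for k
  proof -
    obtain j N where pd: "prod_decode k = (j, N)" by fastforce
    show ?thesis
    proof (cases "j = Suc j0 \<and> Nd < N")
      case True
      have w0: "wt Nd \<mu> N \<ge> 0" unfolding wt_def using d poisson_nonneg[of \<mu> N] mupos by simp
      have "complex_of_real (1 - Sd Nd \<mu>) * (complex_of_real (sqrt (wt Nd \<mu> N)) * F N i)
              * cnj (complex_of_real (sqrt (wt Nd \<mu> N)) * F N i')
           = complex_of_real ((1 - Sd Nd \<mu>) * (sqrt (wt Nd \<mu> N) * sqrt (wt Nd \<mu> N))) * F N i * cnj (F N i')"
        by (rule rescale_helper)
      also have "(1 - Sd Nd \<mu>) * (sqrt (wt Nd \<mu> N) * sqrt (wt Nd \<mu> N)) = poisson \<mu> N"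
        using w0 d poisson_nonneg[of \<mu> N] mupos by (simp add: wt_def)
      finally show ?thesis unfolding D using True pd
        by (simp add: Ktag KF G_def Q_def)
    next
      case False
      then show ?thesis unfolding D using pd
        by (auto simp: Ktag KF G_def Q_def)
    qed
  qed
  define tot where "tot i = (case i of Inl p \<Rightarrow> fst p + snd p | Inr _ \<Rightarrow> (0::nat))" for i :: "(nat \<times> nat) + 'e"
  have Qsupp: "Q N = 0" if "N \<notin> {tot i}" for N
  proof (rule ccontr)
    assume "Q N \<noteq> 0"
    then have "F N i \<noteq> 0" unfolding Q_def by auto
    then have "i \<in> (\<lambda>k. Inl (k, N - k)) ` {..N}" unfolding F_def by (rule fock_support)
    then have "N = tot i" unfolding tot_def by auto
    with that show False by simp
  qed
  have "(Q has_sum sum Q {tot i}) UNIV" by (rule has_sum_support) (use Qsupp in auto)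
  then have Qs: "(Q has_sum infsum Q UNIV) UNIV" by (simp add: infsumI)
  have "(G has_sum ((\<Sum>N\<le>Nd. Q N) + (infsum Q UNIV - (\<Sum>N\<le>Nd. Q N)))) UNIV"
    unfolding G_def by (intro has_sum_add has_sum_point has_sum_row has_sum_tail Qs)
  then have "(G has_sum infsum Q UNIV) UNIV" by simp
  then have "((\<lambda>k. G (prod_decode k)) has_sum infsum Q UNIV) UNIV"
    by (metis bij_prod_decode has_sum_reindex_bij_betw)
  then have "apply_kraus K (xi_weight Nd \<mu>) (xi_states jones tag a \<mu>) i i' = infsum Q UNIV"
    unfolding apply_kraus_def using DG by (simp add: infsumI)
  also have "infsum Q UNIV = dens (poisson \<mu>) (\<lambda>N. fock_state (jones a) N) i i'"
    unfolding dens_def Q_def F_def by simp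
  finally show ?thesis unfolding K_def .
qed

theorem mainTheorem11:
  fixes jones :: "'p::finite \<Rightarrow> complex \<times> complex"
    and Mu :: "real set"
    and Ndecoy :: nat
    and tag :: "'p \<Rightarrow> real \<Rightarrow> (nat \<times> nat) + ('e::countable) \<Rightarrow> complex"
  assumes jones_unit: "\<forall>a. (cmod (fst (jones a)))^2 + (cmod (snd (jones a)))^2 = 1"
    and Mu_fin: "finite Mu"
    and Mu_pos: "\<forall>\<mu>\<in>Mu. \<mu> > 0"
    and tag_l2: "\<forall>a \<mu>. \<mu> \<in> Mu \<longrightarrow> l2 (tag a \<mu>)"
    and tag_on: "\<forall>a b \<mu> \<nu>. \<mu> \<in> Mu \<longrightarrow> \<nu> \<in> Mu \<longrightarrow>
                   cinner (tag a \<mu>) (tag b \<nu>) = (if a = b \<and> \<mu> = \<nu> then 1 else 0)"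
    and tag_orth: "\<forall>a b N \<nu>. N \<le> Ndecoy \<longrightarrow> \<nu> \<in> Mu \<longrightarrow>
                   cinner (fock_state (jones a) N) (tag b \<nu>) = 0"
  shows "\<exists>K. kraus_family K \<and>
           (\<forall>a \<mu> (z::'z). \<mu> \<in> Mu \<longrightarrow>
              apply_kraus K (xi_weight Ndecoy \<mu>) (xi_states jones tag a \<mu>)
                = dens (poisson \<mu>) (\<lambda>N. fock_state (jones a) N))"
proof -
  define T where "T = (UNIV :: 'p set) \<times> Mu"
  have Tfin: "finite T" unfolding T_def using Mu_fin by simp
  obtain g where bij: "bij_betw g {..<card T} T"
    using ex_bij_betw_nat_finite[OF Tfin] by (auto simp: atLeast0LessThan)
  have bij': "bij_betw g {..<card T} ((UNIV :: 'p set) \<times> Mu)" using bij unfolding T_def .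
  show ?thesis
  proof (rule exI[where x="Kf jones tag Mu Ndecoy g (card T)"], intro conjI allI impI)
    show "kraus_family (Kf jones tag Mu Ndecoy g (card T))"
      by (rule Kf_kraus[OF jones_unit Mu_fin _ Mu_pos tag_l2 tag_on bij']) simp
  next
    fix a \<mu> and z :: 'z
    assume mu: "\<mu> \<in> Mu"
    show "apply_kraus (Kf jones tag Mu Ndecoy g (card T)) (xi_weight Ndecoy \<mu>) (xi_states jones tag a \<mu>)
          = dens (poisson \<mu>) (\<lambda>N. fock_state (jones a) N)"
      by (intro ext Kf_output[OF Mu_fin _ Mu_pos tag_l2 tag_on tag_orth bij' mu]) simp
  qed
qed

end
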